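(* Let $n\ge 1$, $\nu>0$, let $M\in\mathbb{R}^{n\times n}$ be diagonal with positive diagonal entries, let $L\in\mathbb{R}^{n\times n}$ be nonsingular, and let $\Pi_k$ be an $n\times n$ diagonal matrix with diagonal entries in $\{0,1\}$. For $\alpha_u,\alpha_y\ge0$ with $\max\{\alpha_u,\alpha_y\}>0$ set $\gamma_1=\frac{\alpha_y^2\nu}{\alpha_y^2\nu+\alpha_u^2}$, $\gamma_2=\frac{\alpha_u^2}{\alpha_y^2\nu+\alpha_u^2}$, $$\mathbb{S}_k=\nu LM^{-1}L^T+M-\frac{1}{\alpha_y^2\nu+\alpha_u^2}(\alpha_y\nu LM^{-1}-\alpha_u I)\Pi_k M\Pi_k(\alpha_y\nu LM^{-1}-\alpha_u I)^T,$$ $L_1=\sqrt{\nu}L(I-\gamma_1\Pi_k)^{1/2}+(I-\gamma_2\Pi_k)^{1/2}M$, $\widehat{\mathbb{S}}_k=L_1M^{-1}L_1^T$, assumed nonsingular. Let $\lambda$ be an eigenvalue of $\widehat{\mathbb{S}}_k^{-1}\mathbb{S}_k$. Then in the two cases below $$\lambda\le\zeta^2+(1+\zeta)^2,$$ where: (i) if $(\alpha_u,\alpha_y)=(1,0)$, then $\zeta=\big\|M^{1/2}\big(\sqrt{\nu}L+M(I-\Pi_k)\big)^{-1}\sqrt{\nu}LM^{-1/2}\big\|$; moreover, if $L+L^T$ is positive definite, then (with $M,L,\Pi_k$ fixed) $\zeta$ is bounded, as $\nu\to0$, by a constant independent of $\nu$; (ii) if $(\alpha_u,\alpha_y)=(0,1)$,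 then $\zeta=\big\|\big(I+\sqrt{\nu}M^{-1/2}LM^{-1/2}(I-\Pi_k)\big)^{-1}\big\|$; moreover $\zeta\to1$ as $\nu\to0$.
   Context: $\|\cdot\|$ is the spectral norm. Square roots of nonnegative diagonal matrices are taken entrywise. Case (i) corresponds to control constraints and case (ii) to state constraints. *)

theory Defs
  imports "HOL-Analysis.Analysis"
begin

definition is_diag :: "real^'n^'n \<Rightarrow> bool" where
  "is_diag A \<longleftrightarrow> (\<forall>i j. i \<noteq> j \<longrightarrow> A $ i $ j = 0)"

definition dsqrt :: "real^'n^'n \<Rightarrow> real^'n^'n" where
  "dsqrt A = (\<chi> i j. if i = j then sqrt (A $ i $ i) else 0)"

definition specnorm :: "real^'n^'n \<Rightarrow> real" where
  "specnorm A = onorm (\<lambda>x. A *v x)"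

definition is_eigenvalue :: "real^'n^'n \<Rightarrow> real \<Rightarrow> bool" where
  "is_eigenvalue A lam \<longleftrightarrow> (\<exists>v. v \<noteq> 0 \<and> A *v v = lam *\<^sub>R v)"

definition posdef :: "real^'n^'n \<Rightarrow> bool" where
  "posdef A \<longleftrightarrow> (\<forall>x. x \<noteq> 0 \<longrightarrow> x \<bullet> (A *v x) > 0)"

definition gam1 :: "real \<Rightarrow> real \<Rightarrow> real \<Rightarrow> real" where
  "gam1 \<nu> au ay = ay\<^sup>2 * \<nu> / (ay\<^sup>2 * \<nu> + au\<^sup>2)"

definition gam2 :: "real \<Rightarrow> real \<Rightarrow> real \<Rightarrow> real" where
  "gam2 \<nu> au ay = au\<^sup>2 / (ay\<^sup>2 * \<nu> + au\<^sup>2)"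

definition Smat :: "real^'n^'n \<Rightarrow> real^'n^'n \<Rightarrow> real^'n^'n \<Rightarrow> real \<Rightarrow> real \<Rightarrow> real \<Rightarrow> real^'n^'n" where
  "Smat M L P \<nu> au ay =
     (let Mi = matrix_inv M;
          B = (ay * \<nu>) *\<^sub>R (L ** Mi) - au *\<^sub>R mat 1
      in \<nu> *\<^sub>R (L ** Mi ** transpose L) + M
         - (1 / (ay\<^sup>2 * \<nu> + au\<^sup>2)) *\<^sub>R (B ** P ** M ** P ** transpose B))"

definition L1mat :: "real^'n^'n \<Rightarrow> real^'n^'n \<Rightarrow> real^'n^'n \<Rightarrow> real \<Rightarrow> real \<Rightarrow> real \<Rightarrow> real^'n^'n" where
  "L1mat M L P \<nu> au ay =
     sqrt \<nu> *\<^sub>R (L ** dsqrt (mat 1 - gam1 \<nu> au ay *\<^sub>R P))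
     + dsqrt (mat 1 - gam2 \<nu> au ay *\<^sub>R P) ** M"

definition Shat :: "real^'n^'n \<Rightarrow> real^'n^'n \<Rightarrow> real^'n^'n \<Rightarrow> real \<Rightarrow> real \<Rightarrow> real \<Rightarrow> real^'n^'n" where
  "Shat M L P \<nu> au ay =
     (let L1 = L1mat M L P \<nu> au ay in L1 ** matrix_inv M ** transpose L1)"

definition zeta1 :: "real^'n^'n \<Rightarrow> real^'n^'n \<Rightarrow> real^'n^'n \<Rightarrow> real \<Rightarrow> real" where
  "zeta1 M L P \<nu> = specnorm (dsqrt M ** matrix_inv (sqrt \<nu> *\<^sub>R L + M ** (mat 1 - P))
       ** (sqrt \<nu> *\<^sub>R L) ** dsqrt (matrix_inv M))"

definition zeta2 :: "real^'n^'n \<Rightarrow> real^'n^'n \<Rightarrow> real^'n^'n \<Rightarrow> real \<Rightarrow> real" where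
  "zeta2 M L P \<nu> = specnorm (matrix_inv (mat 1 + sqrt \<nu> *\<^sub>R
       (dsqrt (matrix_inv M) ** L ** dsqrt (matrix_inv M) ** (mat 1 - P))))"

end

theory Submission
  imports Defs
begin


lemma minv: assumes "invertible (A::real^'n^'n)"
  shows "A ** matrix_inv A = mat 1" "matrix_inv A ** A = mat 1"
  using someI_ex[OF assms[unfolded invertible_def]] unfolding matrix_inv_def by auto

lemma minv_unique: assumes "(A::real^'n^'n) ** B = mat 1" shows "matrix_inv A = B"
proof -
  have BA: "B ** A = mat 1" using assms matrix_left_right_inverse by blast
  hence inv: "invertible A" using assms invertible_def by blast
  have "matrix_inv A = matrix_inv A ** (A ** B)" using assms by simp
  also have "\<dots> = (matrix_inv A ** A) ** B" by (simp add: matrix_mul_assoc)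
  also have "\<dots> = B" using minv(2)[OF inv] by simp
  finally show ?thesis .
qed

lemma dot_transpose: "(transpose A *v x) \<bullet> y = x \<bullet> ((A::real^'n^'n) *v y)"
  by (simp add: dot_lmul_matrix)

lemma transpose_add: "transpose (A + B) = transpose A + transpose (B::real^'n^'m)"
  by (simp add: transpose_def vec_eq_iff)

lemma transpose_diff: "transpose (A - B) = transpose A - transpose (B::real^'n^'m)"
  by (simp add: transpose_def vec_eq_iff)

lemma specnorm_mv: "norm (A *v x) \<le> specnorm A * norm (x::real^'n)"
  unfolding specnorm_def by (rule onorm) simp

lemma specnorm_nonneg: "0 \<le> specnorm (A::real^'n^'n)"
  unfolding specnorm_def by (rule onorm_pos_le) simp

lemma specnorm_transpose_mv: "norm (transpose A *v y) \<le> specnorm (A::real^'n^'n) * norm y"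
proof -
  let ?z = "transpose A *v y"
  have "(norm ?z)^2 = ?z \<bullet> ?z" by (simp add: power2_norm_eq_inner)
  also have "\<dots> = y \<bullet> (A *v ?z)" by (rule dot_transpose)
  also have "\<dots> \<le> norm y * norm (A *v ?z)" by (rule norm_cauchy_schwarz)
  also have "\<dots> \<le> norm y * (specnorm A * norm ?z)"
    by (rule mult_left_mono[OF specnorm_mv]) simp
  finally have h: "(norm ?z)^2 \<le> (specnorm A * norm y) * norm ?z" by (simp add: algebra_simps)
  show ?thesis
  proof (cases "norm ?z = 0")
    case True thus ?thesis using specnorm_nonneg[of A] by simp
  next
    case False
    hence "norm ?z > 0" by simp
    with h show ?thesis by (simp add: power2_eq_square)
  qed
qed

lemma core:
  fixes A B C S Sh :: "real^'n^'n"
  assumes Sh: "Sh = C ** transpose C" and S: "S = A ** transpose A + B ** transpose B"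
    and C: "C = A + B" and inv: "invertible Sh" and ev: "is_eigenvalue (matrix_inv Sh ** S) lam"
  shows "lam \<le> (specnorm (matrix_inv C ** B))^2 + (1 + specnorm (matrix_inv C ** B))^2"
proof -
  let ?z = "specnorm (matrix_inv C ** B)"
  obtain v where v0: "v \<noteq> 0" and vv: "(matrix_inv Sh ** S) *v v = lam *\<^sub>R v"
    using ev unfolding is_eigenvalue_def by blast
  have "S *v v = Sh *v ((matrix_inv Sh ** S) *v v)"
    by (simp add: matrix_vector_mul_assoc matrix_mul_assoc minv[OF inv])
  hence Sv: "S *v v = lam *\<^sub>R (Sh *v v)" using vv by (simp add: matrix_vector_mult_scaleR)
  have "det Sh \<noteq> 0" using inv invertible_det_nz by blast
  hence "det C \<noteq> 0" using Sh by (simp add: det_mul)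
  hence invC: "invertible C" using invertible_det_nz by blast
  hence invCt: "invertible (transpose C)" by (rule transpose_invertible)
  define y where "y = transpose C *v v"
  have "v = matrix_inv (transpose C) *v y"
    unfolding y_def by (simp add: matrix_vector_mul_assoc minv[OF invCt] del: transpose_matrix_vector)
  hence y0: "y \<noteq> 0" using v0 by auto
  have "v \<bullet> (Sh *v v) = y \<bullet> y"
    unfolding Sh y_def by (simp add: dot_transpose matrix_vector_mul_assoc[symmetric] del: transpose_matrix_vector)
  moreover have "v \<bullet> (S *v v) = (transpose A *v v) \<bullet> (transpose A *v v) + (transpose B *v v) \<bullet> (transpose B *v v)"
    unfolding S by (simp add: dot_transpose matrix_vector_mul_assoc[symmetric] matrix_vector_mult_add_rdistrib inner_add_right del: transpose_matrix_vector)
  ultimately have eq: "lam * (y \<bullet> y) = (norm (transpose A *v v))^2 + (norm (transpose B *v v))^2"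
    using Sv by (simp add: power2_norm_eq_inner)
  have tC: "transpose (matrix_inv C) ** transpose C = mat 1"
    by (simp add: matrix_transpose_mul[symmetric] minv[OF invC])
  have Bv: "transpose B *v v = transpose (matrix_inv C ** B) *v y"
    unfolding y_def by (simp add: matrix_transpose_mul matrix_vector_mul_assoc matrix_mul_assoc[symmetric] tC del: transpose_matrix_vector)
  have Av: "transpose A *v v = y - transpose B *v v"
    unfolding y_def C by (simp add: transpose_add matrix_vector_mult_add_rdistrib del: transpose_matrix_vector)
  have nB: "norm (transpose B *v v) \<le> ?z * norm y" unfolding Bv by (rule specnorm_transpose_mv)
  have nA: "norm (transpose A *v v) \<le> (1 + ?z) * norm y"
    unfolding Av using norm_triangle_ineq4[of y "transpose B *v v"] nB by (simp add: algebra_simps)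
  have "(norm (transpose A *v v))^2 \<le> ((1 + ?z) * norm y)^2"
    by (rule power_mono[OF nA]) simp
  moreover have "(norm (transpose B *v v))^2 \<le> (?z * norm y)^2"
    by (rule power_mono[OF nB]) simp
  ultimately have "lam * (norm y)^2 \<le> ((1 + ?z) * norm y)^2 + (?z * norm y)^2"
    using eq by (simp add: power2_norm_eq_inner[symmetric] del: transpose_matrix_vector)
  then have "lam * (norm y)^2 \<le> (?z^2 + (1 + ?z)^2) * (norm y)^2"
  proof -
    have "((1 + ?z) * norm y)^2 + (?z * norm y)^2 = (?z^2 + (1 + ?z)^2) * (norm y)^2"
      by (simp add: power2_eq_square algebra_simps)
    thus ?thesis using \<open>lam * (norm y)^2 \<le> ((1 + ?z) * norm y)^2 + (?z * norm y)^2\<close> by simp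
  qed
  moreover have "(norm y)^2 > 0" using y0 by simp
  ultimately show ?thesis by simp
qed



definition diagm :: "('n::finite \<Rightarrow> real) \<Rightarrow> real^'n^'n" where
  "diagm d = (\<chi> i j. if i = j then d i else 0)"

lemma diagm_nth[simp]: "diagm d $ i $ j = (if i = j then d i else 0)"
  by (simp add: diagm_def)

lemma ifz_mult: "(if P then x else 0) * (y::real) = (if P then x * y else 0)" by simp
lemma mult_ifz: "(y::real) * (if P then x else 0) = (if P then y * x else 0)" by simp

lemma diagm_mul[simp]: "diagm a ** diagm b = diagm (\<lambda>i. a i * b i)"
  by (simp add: vec_eq_iff matrix_matrix_mult_def ifz_mult mult_ifz)

lemma mul_diagm_nth[simp]: "(A ** diagm b) $ i $ j = A $ i $ j * b j"
  by (simp add: matrix_matrix_mult_def ifz_mult mult_ifz)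

lemma diagm_mul_nth[simp]: "(diagm a ** A) $ i $ j = a i * A $ i $ j"
  by (simp add: matrix_matrix_mult_def ifz_mult mult_ifz)

lemma diagm_mv: "diagm a *v x = (\<chi> i. a i * x $ i)"
  by (simp add: vec_eq_iff matrix_vector_mult_def ifz_mult mult_ifz)

lemma transpose_diagm[simp]: "transpose (diagm a) = diagm a"
  by (simp add: vec_eq_iff transpose_def)

lemma mat1_diagm: "mat 1 = diagm (\<lambda>_. 1)"
  by (simp add: vec_eq_iff mat_def)

lemma diagm_add[simp]: "diagm a + diagm b = diagm (\<lambda>i. a i + b i)"
  by (simp add: vec_eq_iff)
lemma diagm_diff[simp]: "diagm a - diagm b = diagm (\<lambda>i. a i - b i)"
  by (simp add: vec_eq_iff)
lemma diagm_uminus[simp]: "- diagm a = diagm (\<lambda>i. - a i)"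
  by (simp add: vec_eq_iff)
lemma diagm_scaleR[simp]: "c *\<^sub>R diagm a = diagm (\<lambda>i. c * a i)"
  by (simp add: vec_eq_iff)
lemma dsqrt_diagm[simp]: "dsqrt (diagm a) = diagm (\<lambda>i. sqrt (a i))"
  by (simp add: vec_eq_iff dsqrt_def)

lemma minv_diagm: assumes "\<forall>i. a i \<noteq> 0" shows "matrix_inv (diagm a) = diagm (\<lambda>i. 1 / a i)"
  by (rule minv_unique) (simp add: assms mat1_diagm)

lemma is_diag_diagm: "is_diag A \<Longrightarrow> A = diagm (\<lambda>i. A $ i $ i)"
  by (auto simp: is_diag_def vec_eq_iff)



lemma mul_diagm_diagm[simp]: "X ** diagm a ** diagm b = X ** diagm (\<lambda>i. a i * b i)"
  by (simp add: matrix_mul_assoc[symmetric])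
lemma mul_diagm_one[simp]: "X ** diagm (\<lambda>_. 1) = X"
  by (simp add: mat1_diagm[symmetric])
lemma diagm_one_mul[simp]: "diagm (\<lambda>_. 1) ** X = X"
  by (simp add: mat1_diagm[symmetric])
lemma sc_left: "(k *\<^sub>R A) ** B = k *\<^sub>R (A ** (B::real^'n^'n))"
  by (simp add: scalar_matrix_assoc)
lemma sc_right: "A ** (k *\<^sub>R B) = k *\<^sub>R (A ** (B::real^'n^'n))"
  by (simp add: matrix_scalar_ac scalar_matrix_assoc)

lemma matrix_add_rdistrib: "((A::real^'n^'n) + B) ** C = A ** C + B ** C"
  by (simp add: matrix_matrix_mult_def vec_eq_iff algebra_simps sum.distrib)

lemma diagm_add2[simp]: "diagm a + (diagm b + X) = diagm (\<lambda>i. a i + b i) + X"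
  by (simp add: add.assoc[symmetric])

lemma minv_mult: assumes "invertible (A::real^'n^'n)" "invertible (B::real^'n^'n)"
  shows "matrix_inv (A ** B) = matrix_inv B ** matrix_inv A"
proof (rule minv_unique)
  have "A ** B ** (matrix_inv B ** matrix_inv A) = A ** (B ** matrix_inv B) ** matrix_inv A"
    by (simp add: matrix_mul_assoc)
  thus "A ** B ** (matrix_inv B ** matrix_inv A) = mat 1" by (simp add: minv assms)
qed

lemma invertible_diagm: "\<forall>i. a i \<noteq> 0 \<Longrightarrow> invertible (diagm a)"
  unfolding invertible_def
  by (rule exI[of _ "diagm (\<lambda>i. 1 / a i)"]) (simp add: mat1_diagm)

lemma case1:
  fixes L :: "real^'n^'n"
  assumes m: "\<forall>i. m i > 0" and p: "\<forall>i. p i \<in> {0,1}" and nu: "\<nu> > 0"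
    and inv: "invertible (Shat (diagm m) L (diagm p) \<nu> 1 0)"
    and ev: "is_eigenvalue (matrix_inv (Shat (diagm m) L (diagm p) \<nu> 1 0) ** Smat (diagm m) L (diagm p) \<nu> 1 0) lam"
  shows "lam \<le> (zeta1 (diagm m) L (diagm p) \<nu>)\<^sup>2 + (1 + zeta1 (diagm m) L (diagm p) \<nu>)\<^sup>2"
proof -
  define Ri where "Ri = diagm (\<lambda>i. 1 / sqrt (m i))"
  define R where "R = diagm (\<lambda>i. sqrt (m i))"
  define L1 where "L1 = sqrt \<nu> *\<^sub>R L + diagm (\<lambda>i. (1 - p i) * m i)"
  define A0 where "A0 = sqrt \<nu> *\<^sub>R (L ** Ri)"
  define B0 where "B0 = diagm (\<lambda>i. (1 - p i) * sqrt (m i))"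
  have m0: "\<forall>i. m i \<noteq> 0" using m by (metis less_irrefl)
  have Mi: "matrix_inv (diagm m) = diagm (\<lambda>i. 1 / m i)" by (rule minv_diagm[OF m0])
  have RiRi: "(\<lambda>i. 1 / sqrt (m i) * (1 / sqrt (m i))) = (\<lambda>i. 1 / m i)"
    by (rule ext) (simp add: m abs_of_pos less_imp_le)
  have sqp: "\<And>i. sqrt (1 - p i) = 1 - p i" "\<And>i. sqrt (p i) = p i" "\<And>i. p i * p i = p i"
    using p by (metis insert_iff singletonD mult_zero_left mult_1 diff_zero cancel_comm_monoid_add_class.diff_cancel real_sqrt_zero real_sqrt_one)+
  have sq1: "(\<lambda>i. sqrt (1 - p i) * m i) = (\<lambda>i. (1 - p i) * m i)"
    by (simp add: sqp)
  have L1: "L1mat (diagm m) L (diagm p) \<nu> 1 0 = L1"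
    unfolding L1mat_def gam1_def gam2_def L1_def using sq1 by (simp add: mat1_diagm)
  have Sh: "Shat (diagm m) L (diagm p) \<nu> 1 0 = (L1 ** Ri) ** transpose (L1 ** Ri)"
    unfolding Shat_def Let_def L1 Mi Ri_def
    by (simp add: matrix_transpose_mul matrix_mul_assoc m abs_of_pos)
  have S: "Smat (diagm m) L (diagm p) \<nu> 1 0 = B0 ** transpose B0 + A0 ** transpose A0"
    unfolding Smat_def Let_def Mi A0_def B0_def Ri_def
    by (simp add: matrix_transpose_mul matrix_mul_assoc m abs_of_pos mat1_diagm sc_left sc_right
        transpose_scalar algebra_simps sqp nu less_imp_le)
  have msq: "(\<lambda>i. (1 - p i) * m i / sqrt (m i)) = (\<lambda>i. (1 - p i) * sqrt (m i))"
    by (rule ext) (metis times_divide_eq_right real_div_sqrt m less_imp_le)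
  have C: "L1 ** Ri = B0 + A0"
    unfolding L1_def A0_def B0_def Ri_def
    by (simp add: matrix_add_rdistrib sc_left m abs_of_pos msq)
  have "det (L1 ** Ri) \<noteq> 0" using inv Sh invertible_det_nz by (metis det_mul mult_zero_left)
  hence "det L1 \<noteq> 0" by (simp add: det_mul)
  hence invL1: "invertible L1" using invertible_det_nz by blast
  have invRi: "invertible Ri" unfolding Ri_def by (rule invertible_diagm) (simp add: m less_imp_le m0)
  have iRi: "matrix_inv Ri = diagm (\<lambda>i. sqrt (m i))" unfolding Ri_def
    by (subst minv_diagm) (simp_all add: m0)
  have L1': "sqrt \<nu> *\<^sub>R L + diagm m ** (mat 1 - diagm p) = L1"
    unfolding L1_def by (simp add: mat1_diagm mult.commute)
  have z: "zeta1 (diagm m) L (diagm p) \<nu> = specnorm (matrix_inv (L1 ** Ri) ** A0)"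
    unfolding minv_mult[OF invL1 invRi] iRi
    unfolding zeta1_def L1' Mi A0_def Ri_def
    by (simp add: sc_left sc_right matrix_mul_assoc real_sqrt_divide)
  show ?thesis using core[OF Sh S C inv ev] z by simp
qed



lemma diagm_zero[simp]: "diagm (\<lambda>_. 0) = 0"
  by (simp add: vec_eq_iff)

lemma LdL_add: "(X::real^'n^'n) ** diagm a ** Y + X ** diagm b ** Y = X ** diagm (\<lambda>i. a i + b i) ** (Y::real^'n^'n)"
proof -
  have "diagm (\<lambda>i. a i + b i) = diagm a + diagm b" by simp
  thus ?thesis by (simp only: matrix_add_ldistrib matrix_add_rdistrib)
qed

lemma case2:
  fixes L :: "real^'n^'n"
  assumes m: "\<forall>i. m i > 0" and p: "\<forall>i. p i \<in> {0,1}" and nu: "\<nu> > 0"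
    and inv: "invertible (Shat (diagm m) L (diagm p) \<nu> 0 1)"
    and ev: "is_eigenvalue (matrix_inv (Shat (diagm m) L (diagm p) \<nu> 0 1) ** Smat (diagm m) L (diagm p) \<nu> 0 1) lam"
  shows "lam \<le> (zeta2 (diagm m) L (diagm p) \<nu>)\<^sup>2 + (1 + zeta2 (diagm m) L (diagm p) \<nu>)\<^sup>2"
proof -
  define Ri where "Ri = diagm (\<lambda>i. 1 / sqrt (m i))"
  define L1 where "L1 = sqrt \<nu> *\<^sub>R (L ** diagm (\<lambda>i. 1 - p i)) + diagm m"
  define A0 where "A0 = sqrt \<nu> *\<^sub>R (L ** diagm (\<lambda>i. (1 - p i) / sqrt (m i)))"
  define B0 where "B0 = diagm (\<lambda>i. sqrt (m i))"
  have m0: "\<forall>i. m i \<noteq> 0" using m by (metis less_irrefl)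
  have Mi: "matrix_inv (diagm m) = diagm (\<lambda>i. 1 / m i)" by (rule minv_diagm[OF m0])
  have sqp: "\<And>i. sqrt (1 - p i) = 1 - p i" "\<And>i. sqrt (p i) = p i" "\<And>i. p i * p i = p i"
    using p by (metis insert_iff singletonD mult_zero_left mult_1 diff_zero cancel_comm_monoid_add_class.diff_cancel real_sqrt_zero real_sqrt_one)+
  have L1: "L1mat (diagm m) L (diagm p) \<nu> 0 1 = L1"
    unfolding L1mat_def gam1_def gam2_def L1_def using nu by (simp add: mat1_diagm sqp)
  have Sh: "Shat (diagm m) L (diagm p) \<nu> 0 1 = (L1 ** Ri) ** transpose (L1 ** Ri)"
    unfolding Shat_def Let_def L1 Mi Ri_def
    by (simp add: matrix_transpose_mul matrix_mul_assoc m abs_of_pos)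
  have S: "Smat (diagm m) L (diagm p) \<nu> 0 1 = A0 ** transpose A0 + B0 ** transpose B0"
    unfolding Smat_def Let_def Mi A0_def B0_def
    apply (simp add: matrix_transpose_mul matrix_mul_assoc m abs_of_pos mat1_diagm sc_left sc_right
        transpose_scalar algebra_simps sqp nu less_imp_le)
    apply (simp add: scaleR_add_right[symmetric] LdL_add nu less_imp_le m0 sqp add_divide_distrib[symmetric])
    done
  have msq: "(\<lambda>i. m i / sqrt (m i)) = (\<lambda>i. sqrt (m i))"
    by (rule ext) (metis real_div_sqrt m less_imp_le)
  have C: "L1 ** Ri = A0 + B0"
    unfolding L1_def A0_def B0_def Ri_def
    by (simp add: matrix_add_rdistrib sc_left m abs_of_pos msq)
  have "det (L1 ** Ri) \<noteq> 0" using inv Sh invertible_det_nz by (metis det_mul mult_zero_left)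
  hence invC: "invertible (L1 ** Ri)" using invertible_det_nz by blast
  have invRi: "invertible Ri" unfolding Ri_def by (rule invertible_diagm) (simp add: m less_imp_le m0)
  have iRi: "matrix_inv Ri = B0" unfolding Ri_def B0_def
    by (subst minv_diagm) (simp_all add: m0)
  have mm: "(\<lambda>i. m i / (sqrt (m i) * sqrt (m i))) = (\<lambda>i. 1)"
    by (rule ext) (simp add: m less_imp_le m0)
  have inner: "mat 1 + sqrt \<nu> *\<^sub>R (dsqrt (matrix_inv (diagm m)) ** L ** dsqrt (matrix_inv (diagm m)) ** (mat 1 - diagm p)) = Ri ** (L1 ** Ri)"
    unfolding L1_def Ri_def Mi
    by (simp add: matrix_add_rdistrib matrix_add_ldistrib sc_left sc_right matrix_mul_assoc real_sqrt_divide mat1_diagm m abs_of_pos m0)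
  have z: "zeta2 (diagm m) L (diagm p) \<nu> = specnorm (matrix_inv (L1 ** Ri) ** B0)"
    unfolding zeta2_def inner minv_mult[OF invRi invC] iRi ..
  show ?thesis using core[OF Sh S C inv ev] z by simp
qed



lemma inv_of_ker: "(\<forall>x. (A::real^'n^'n) *v x = 0 \<longrightarrow> x = 0) \<Longrightarrow> invertible A"
  using matrix_left_invertible_ker invertible_left_inverse by blast

lemma near_id:
  fixes G :: "real^'n^'n"
  assumes t: "t \<ge> 0" and tg: "t * specnorm G < 1"
  shows "invertible (mat 1 + t *\<^sub>R G)"
    "1 / (1 + t * specnorm G) \<le> specnorm (matrix_inv (mat 1 + t *\<^sub>R G))"
    "specnorm (matrix_inv (mat 1 + t *\<^sub>R G)) \<le> 1 / (1 - t * specnorm G)"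
proof -
  let ?g = "specnorm G"
  let ?N = "mat 1 + t *\<^sub>R G"
  have Ny: "norm y - t * ?g * norm y \<le> norm (?N *v y)" "norm (?N *v y) \<le> norm y + t * ?g * norm y" for y
  proof -
    have e: "?N *v y = y + t *\<^sub>R (G *v y)"
      by (simp add: matrix_vector_mult_add_rdistrib scaleR_matrix_vector_assoc)
    have "norm (t *\<^sub>R (G *v y)) \<le> t * ?g * norm y"
      using specnorm_mv[of G y] t by (simp add: mult_left_mono mult.assoc)
    thus "norm y - t * ?g * norm y \<le> norm (?N *v y)" "norm (?N *v y) \<le> norm y + t * ?g * norm y"
      unfolding e using norm_triangle_ineq[of y "t *\<^sub>R (G *v y)"] norm_triangle_ineq2[of y "- (t *\<^sub>R (G *v y))"]
      by auto
  qed
  have pos: "1 - t * ?g > 0" using tg by simp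
  show inv: "invertible ?N"
  proof (rule inv_of_ker, intro allI impI)
    fix x assume "?N *v x = 0"
    hence "(1 - t * ?g) * norm x \<le> 0" using Ny(1)[of x] by (simp add: algebra_simps)
    hence "norm x \<le> 0" using pos by (simp add: mult_le_0_iff)
    thus "x = 0" by simp
  qed
  have NN: "?N *v (matrix_inv ?N *v x) = x" for x
    by (simp add: matrix_vector_mul_assoc minv[OF inv])
  have g0: "0 \<le> ?g" by (rule specnorm_nonneg)
  show "specnorm (matrix_inv ?N) \<le> 1 / (1 - t * ?g)"
    unfolding specnorm_def[of "matrix_inv ?N"]
  proof (rule onorm_bound)
    show "0 \<le> 1 / (1 - t * ?g)" using pos by simp
    fix x
    have "(1 - t * ?g) * norm (matrix_inv ?N *v x) \<le> norm x"
      using Ny(1)[of "matrix_inv ?N *v x"] NN[of x] by (simp add: algebra_simps)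
    thus "norm (matrix_inv ?N *v x) \<le> 1 / (1 - t * ?g) * norm x"
      using pos by (simp add: field_simps)
  qed
  obtain y :: "real^'n" where y: "y \<noteq> 0" using axis_eq_0_iff[of _ "1::real"] by (metis one_neq_zero)
  have "norm y = norm (matrix_inv ?N *v (?N *v y))"
    by (simp add: matrix_vector_mul_assoc minv[OF inv])
  also have "\<dots> \<le> specnorm (matrix_inv ?N) * norm (?N *v y)" by (rule specnorm_mv)
  also have "\<dots> \<le> specnorm (matrix_inv ?N) * ((1 + t * ?g) * norm y)"
    using Ny(2)[of y] specnorm_nonneg[of "matrix_inv ?N"] by (intro mult_left_mono) (simp_all add: algebra_simps)
  finally have "1 * norm y \<le> (specnorm (matrix_inv ?N) * (1 + t * ?g)) * norm y" by (simp add: mult.assoc)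
  hence "1 \<le> specnorm (matrix_inv ?N) * (1 + t * ?g)" using y by (simp only: mult_le_cancel_right) simp
  moreover have "1 + t * ?g > 0" using t g0 by (simp add: add_pos_nonneg)
  ultimately show "1 / (1 + t * ?g) \<le> specnorm (matrix_inv ?N)" by (simp add: field_simps)
qed

lemma lim2:
  fixes G :: "real^'n^'n"
  shows "((\<lambda>\<nu>. specnorm (matrix_inv (mat 1 + sqrt \<nu> *\<^sub>R G))) \<longlongrightarrow> 1) (at_right 0)"
proof -
  let ?g = "specnorm G"
  have s: "((\<lambda>\<nu>. sqrt \<nu> * ?g) \<longlongrightarrow> 0) (at_right 0)"
  proof -
    have "((\<lambda>\<nu>::real. \<nu>) \<longlongrightarrow> 0) (at_right 0)" by (rule tendsto_ident_at)
    hence "((\<lambda>\<nu>::real. sqrt \<nu> * ?g) \<longlongrightarrow> sqrt 0 * ?g) (at_right 0)"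
      by (intro tendsto_intros)
    thus ?thesis by simp
  qed
  have ev: "eventually (\<lambda>\<nu>. sqrt \<nu> * ?g < 1) (at_right 0)"
    using order_tendstoD(2)[OF s] by simp
  have l1: "((\<lambda>\<nu>. 1 / (1 + sqrt \<nu> * ?g)) \<longlongrightarrow> 1 / (1 + 0)) (at_right 0)"
    by (intro tendsto_intros s) simp
  have l2: "((\<lambda>\<nu>. 1 / (1 - sqrt \<nu> * ?g)) \<longlongrightarrow> 1 / (1 - 0)) (at_right 0)"
    by (intro tendsto_intros s) simp
  show ?thesis
  proof (rule tendsto_sandwich[OF _ _ l1[simplified] l2[simplified]])
    show "eventually (\<lambda>\<nu>. 1 / (1 + sqrt \<nu> * ?g) \<le> specnorm (matrix_inv (mat 1 + sqrt \<nu> *\<^sub>R G))) (at_right 0)"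
      using ev eventually_at_right_less[of "0::real"] by eventually_elim (rule near_id(2), simp_all)
    show "eventually (\<lambda>\<nu>. specnorm (matrix_inv (mat 1 + sqrt \<nu> *\<^sub>R G)) \<le> 1 / (1 - sqrt \<nu> * ?g)) (at_right 0)"
      using ev eventually_at_right_less[of "0::real"] by eventually_elim (rule near_id(3), simp_all)
  qed
qed



lemma posdef_coercive:
  fixes L :: "real^'n^'n"
  assumes pd: "posdef (L + transpose L)"
  shows "\<exists>c>0. \<forall>x. c * (norm x)^2 \<le> x \<bullet> (L *v x)"
proof -
  let ?f = "\<lambda>x. x \<bullet> (L *v x)"
  have q: "x \<bullet> ((L + transpose L) *v x) = 2 * ?f x" for x
  proof -
    have "x \<bullet> (transpose L *v x) = (L *v x) \<bullet> x"
      using dot_transpose[of "transpose L" x x] by simp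
    thus ?thesis by (simp add: matrix_vector_mult_add_rdistrib inner_add_right inner_commute del: transpose_matrix_vector)
  qed
  have "continuous_on (sphere 0 1) ?f"
    by (intro continuous_intros linear_continuous_on matrix_vector_mul_bounded_linear)
  moreover have "sphere (0::real^'n) 1 \<noteq> {}"
  proof -
    obtain i :: 'n where True by simp
    have "axis i (1::real) \<in> sphere 0 1" by simp
    thus ?thesis by blast
  qed
  ultimately obtain x0 where x0: "x0 \<in> sphere 0 1" and mn: "\<forall>y\<in>sphere 0 1. ?f x0 \<le> ?f y"
    using continuous_attains_inf[of "sphere (0::real^'n) 1" ?f] by auto
  have "x0 \<noteq> 0" using x0 by auto
  hence "x0 \<bullet> ((L + transpose L) *v x0) > 0" using pd unfolding posdef_def by blast
  hence c0: "?f x0 > 0" using q by simp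
  have "?f x0 * (norm x)^2 \<le> ?f x" for x
  proof (cases "x = 0")
    case True thus ?thesis by simp
  next
    case False
    let ?u = "x /\<^sub>R norm x"
    have "?u \<in> sphere 0 1" using False by simp
    hence a: "?f x0 \<le> ?f ?u" using mn by blast
    have b: "?f x = (norm x)^2 * ?f ?u"
    proof -
      have e1: "?f (a *\<^sub>R y) = a^2 * ?f y" for a y
        by (simp add: matrix_vector_mult_scaleR power2_eq_square del: transpose_matrix_vector)
      have "x = norm x *\<^sub>R ?u" using False by simp
      thus ?thesis using e1[of "norm x" ?u] by metis
    qed
    have "(norm x)^2 * ?f x0 \<le> (norm x)^2 * ?f ?u" by (rule mult_left_mono[OF a]) simp
    thus ?thesis unfolding b by (simp only: mult.commute)
  qed
  thus ?thesis using c0 by blast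
qed

lemma bound_e:
  fixes L :: "real^'n^'n"
  assumes c: "c > 0" "\<forall>x. c * (norm x)^2 \<le> x \<bullet> (L *v x)"
    and t: "t > 0" and m: "\<forall>i. m i > 0" and q: "\<forall>i. q i \<in> {0,1}"
    and eq: "(t *\<^sub>R L + diagm (\<lambda>i. m i * q i)) *v e = diagm (\<lambda>i. m i * q i) *v v"
  shows "norm e \<le> specnorm L * specnorm (diagm (\<lambda>i. q i / sqrt (m i))) * specnorm (diagm (\<lambda>i. sqrt (m i * q i))) / c * norm v"
proof -
  define D where "D = diagm (\<lambda>i. m i * q i)"
  define Dh where "Dh = diagm (\<lambda>i. sqrt (m i * q i))"
  define W where "W = diagm (\<lambda>i. q i / sqrt (m i))"
  define Q where "Q = diagm q"
  have mq0: "0 \<le> m i * q i" for i using q[rule_format, of i] m[rule_format, of i] by auto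
  have DhDh: "Dh ** Dh = D" unfolding Dh_def D_def using mq0 by simp
  have WDh: "W ** Dh = Q" unfolding W_def Dh_def Q_def
  proof -
    have "(\<lambda>i. q i / sqrt (m i) * sqrt (m i * q i)) = q"
    proof
      fix i show "q i / sqrt (m i) * sqrt (m i * q i) = q i"
        using q[rule_format, of i] m[rule_format, of i] by (cases "q i = 0") (auto simp: real_sqrt_mult less_imp_le)
    qed
    thus "diagm (\<lambda>i. q i / sqrt (m i)) ** diagm (\<lambda>i. sqrt (m i * q i)) = diagm q" by simp
  qed
  have Te: "t *\<^sub>R (L *v e) + D *v e = D *v v"
    using eq unfolding D_def by (simp add: matrix_vector_mult_add_rdistrib scaleR_matrix_vector_assoc)
  have tDh: "transpose Dh = Dh" unfolding Dh_def by simp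
  have xDy: "x \<bullet> (D *v y) = (Dh *v x) \<bullet> (Dh *v y)" for x y
  proof -
    have "(transpose Dh *v x) \<bullet> (Dh *v y) = x \<bullet> (Dh *v (Dh *v y))" by (rule dot_transpose)
    thus ?thesis unfolding tDh DhDh[symmetric] matrix_vector_mul_assoc[symmetric] by simp
  qed
  have eDe: "e \<bullet> (D *v e) = (Dh *v e) \<bullet> (Dh *v e)" and eDv: "e \<bullet> (D *v v) = (Dh *v e) \<bullet> (Dh *v v)"
    by (rule xDy)+
  have "t * (e \<bullet> (L *v e)) + e \<bullet> (D *v e) = e \<bullet> (D *v v)"
    using arg_cong[OF Te, of "\<lambda>z. e \<bullet> z"] by (simp add: inner_add_right)
  moreover have "0 \<le> t * (e \<bullet> (L *v e))"
  proof -
    have "0 \<le> c * (norm e)^2" using c by simp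
    hence "0 \<le> e \<bullet> (L *v e)" using c(2) by (meson order_trans)
    thus ?thesis using t by simp
  qed
  ultimately have "(norm (Dh *v e))^2 \<le> (Dh *v e) \<bullet> (Dh *v v)"
    using eDe eDv by (simp add: power2_norm_eq_inner)
  also have "\<dots> \<le> norm (Dh *v e) * norm (Dh *v v)" by (rule norm_cauchy_schwarz)
  finally have "norm (Dh *v e) * norm (Dh *v e) \<le> norm (Dh *v e) * norm (Dh *v v)" by (simp add: power2_eq_square)
  hence h1: "norm (Dh *v e) \<le> norm (Dh *v v)"
    by (cases "norm (Dh *v e) = 0") auto
  have LQ: "L *v e = Q *v (L *v e)"
  proof -
    have "(L *v e) $ i = q i * (L *v e) $ i" for i
    proof (cases "q i = 0")
      case True
      have "t * (L *v e) $ i + m i * q i * e $ i = m i * q i * v $ i"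
        using arg_cong[OF Te, of "\<lambda>z. z $ i"] unfolding D_def by (simp add: diagm_mv)
      thus ?thesis using True t by simp
    next
      case False thus ?thesis using q by auto
    qed
    thus ?thesis unfolding Q_def by (simp add: diagm_mv vec_eq_iff)
  qed
  have "e \<bullet> (L *v e) = (Q *v e) \<bullet> (L *v e)"
    using dot_transpose[of Q e "L *v e"] LQ by (simp add: Q_def del: transpose_matrix_vector)
  also have "\<dots> \<le> norm (Q *v e) * norm (L *v e)" by (rule norm_cauchy_schwarz)
  also have "\<dots> \<le> norm (Q *v e) * (specnorm L * norm e)" by (rule mult_left_mono[OF specnorm_mv]) simp
  finally have h2: "c * (norm e)^2 \<le> norm (Q *v e) * (specnorm L * norm e)" using c(2) by (meson order_trans)
  have h3: "norm (Q *v e) \<le> specnorm W * norm (Dh *v e)"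
    unfolding WDh[symmetric] matrix_vector_mul_assoc[symmetric] by (rule specnorm_mv)
  have h4: "norm (Dh *v v) \<le> specnorm Dh * norm v" by (rule specnorm_mv)
  show ?thesis
  proof (cases "e = 0")
    case True thus ?thesis using c specnorm_nonneg[of L] specnorm_nonneg[of W] specnorm_nonneg[of Dh]
      unfolding W_def[symmetric] Dh_def[symmetric] by simp
  next
    case False
    hence ne: "norm e > 0" by simp
    from h2 have "c * norm e * norm e \<le> (norm (Q *v e) * specnorm L) * norm e" by (simp add: power2_eq_square algebra_simps)
    hence "c * norm e \<le> norm (Q *v e) * specnorm L" using ne by simp
    also have "\<dots> \<le> (specnorm W * (specnorm Dh * norm v)) * specnorm L"
      using h1 h3 h4 specnorm_nonneg[of L] specnorm_nonneg[of W]
      by (intro mult_right_mono) (auto intro: order_trans mult_left_mono)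
    finally have "c * norm e \<le> specnorm L * specnorm W * specnorm Dh * norm v" by (simp add: algebra_simps)
    thus ?thesis unfolding W_def[symmetric] Dh_def[symmetric] using c by (simp add: field_simps)
  qed
qed



lemma zeta1_bound:
  fixes L :: "real^'n^'n"
  assumes m: "\<forall>i. m i > 0" and p: "\<forall>i. p i \<in> {0,1}" and pd: "posdef (L + transpose L)"
  shows "\<exists>K. \<forall>\<nu>>0. zeta1 (diagm m) L (diagm p) \<nu> \<le> K"
proof -
  obtain c where c: "c > 0" "\<forall>x. c * (norm x)^2 \<le> x \<bullet> (L *v x)" using posdef_coercive[OF pd] by blast
  define q where "q = (\<lambda>i. 1 - p i)"
  have q: "\<forall>i. q i \<in> {0,1}" using p unfolding q_def by auto
  define K1 where "K1 = specnorm L * specnorm (diagm (\<lambda>i. q i / sqrt (m i))) * specnorm (diagm (\<lambda>i. sqrt (m i * q i))) / c"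
  define R where "R = dsqrt (diagm m)"
  define Ri where "Ri = dsqrt (matrix_inv (diagm m))"
  define D where "D = diagm (\<lambda>i. m i * q i)"
  have K10: "0 \<le> K1" unfolding K1_def using c by (intro divide_nonneg_pos mult_nonneg_nonneg specnorm_nonneg) simp_all
  show ?thesis
  proof (intro exI allI impI)
    fix \<nu> :: real assume nu: "\<nu> > 0"
    define t where "t = sqrt \<nu>"
    have t: "t > 0" unfolding t_def using nu by simp
    define T where "T = sqrt \<nu> *\<^sub>R L + diagm m ** (mat 1 - diagm p)"
    have T: "T = t *\<^sub>R L + D" unfolding T_def t_def D_def q_def by (simp add: mat1_diagm)
    have be: "T *v e = D *v v \<Longrightarrow> norm e \<le> K1 * norm v" for e v
      unfolding K1_def T D_def by (rule bound_e[OF c t m q])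
    have invT: "invertible T"
      by (rule inv_of_ker) (use be[of _ 0] in auto)
    have TT: "T *v (matrix_inv T *v w) = w" for w
      by (simp add: matrix_vector_mul_assoc minv[OF invT])
    have "zeta1 (diagm m) L (diagm p) \<nu> = specnorm (R ** matrix_inv T ** (t *\<^sub>R L) ** Ri)"
      unfolding zeta1_def R_def Ri_def T_def t_def ..
    also have "\<dots> \<le> specnorm R * (1 + K1) * specnorm Ri"
      unfolding specnorm_def[of "R ** matrix_inv T ** (t *\<^sub>R L) ** Ri"]
    proof (rule onorm_bound)
      show "0 \<le> specnorm R * (1 + K1) * specnorm Ri" using K10 by (intro mult_nonneg_nonneg specnorm_nonneg) simp_all
      fix u
      define v where "v = Ri *v u"
      define x where "x = matrix_inv T *v ((t *\<^sub>R L) *v v)"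
      have Z: "(R ** matrix_inv T ** (t *\<^sub>R L) ** Ri) *v u = R *v x"
        unfolding x_def v_def by (simp add: matrix_vector_mul_assoc matrix_mul_assoc)
      have Tx: "T *v x = (t *\<^sub>R L) *v v" unfolding x_def by (rule TT)
      have "T *v (v - x) = T *v v - T *v x" by (simp add: matrix_vector_mult_diff_distrib)
      also have "\<dots> = D *v v" unfolding Tx by (simp add: T matrix_vector_mult_add_rdistrib)
      finally have "T *v (v - x) = D *v v" .
      hence ne: "norm (v - x) \<le> K1 * norm v" by (rule be)
      have "norm x \<le> norm v + norm (v - x)" using norm_triangle_ineq4[of v "v - x"] by simp
      hence nx: "norm x \<le> (1 + K1) * norm v" using ne by (simp add: algebra_simps)
      have "norm (R *v x) \<le> specnorm R * norm x" by (rule specnorm_mv)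
      also have "\<dots> \<le> specnorm R * ((1 + K1) * norm v)"
        by (rule mult_left_mono[OF nx specnorm_nonneg])
      also have "\<dots> \<le> specnorm R * ((1 + K1) * (specnorm Ri * norm u))"
        unfolding v_def using K10 specnorm_nonneg[of R]
        by (intro mult_left_mono specnorm_mv) simp_all
      finally show "norm ((R ** matrix_inv T ** (t *\<^sub>R L) ** Ri) *v u) \<le> specnorm R * (1 + K1) * specnorm Ri * norm u"
        unfolding Z by (simp add: mult.assoc)
    qed
    finally show "zeta1 (diagm m) L (diagm p) \<nu> \<le> specnorm R * (1 + K1) * specnorm Ri" .
  qed
qed


theorem proposition4p7:
  fixes M L P :: "real^'n^'n"
  assumes M_diag: "is_diag M" and M_pos: "\<forall>i. M $ i $ i > 0"
    and L_inv: "invertible L"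
    and P_diag: "is_diag P" and P_01: "\<forall>i. P $ i $ i \<in> {0, 1}"
  shows
    "(\<forall>\<nu> lam. \<nu> > 0 \<longrightarrow> invertible (Shat M L P \<nu> 1 0) \<longrightarrow>
        is_eigenvalue (matrix_inv (Shat M L P \<nu> 1 0) ** Smat M L P \<nu> 1 0) lam \<longrightarrow>
        lam \<le> (zeta1 M L P \<nu>)\<^sup>2 + (1 + zeta1 M L P \<nu>)\<^sup>2)
   \<and> (posdef (L + transpose L) \<longrightarrow>
        (\<exists>C. eventually (\<lambda>\<nu>. zeta1 M L P \<nu> \<le> C) (at_right 0)))
   \<and> (\<forall>\<nu> lam. \<nu> > 0 \<longrightarrow> invertible (Shat M L P \<nu> 0 1) \<longrightarrow>
        is_eigenvalue (matrix_inv (Shat M L P \<nu> 0 1) ** Smat M L P \<nu> 0 1) lam \<longrightarrow>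
        lam \<le> (zeta2 M L P \<nu>)\<^sup>2 + (1 + zeta2 M L P \<nu>)\<^sup>2)
   \<and> ((\<lambda>\<nu>. zeta2 M L P \<nu>) \<longlongrightarrow> 1) (at_right 0)"
proof -
  define m where "m = (\<lambda>i. M $ i $ i)"
  define p where "p = (\<lambda>i. P $ i $ i)"
  have hM: "M = diagm m" using is_diag_diagm[OF M_diag] unfolding m_def .
  have hP: "P = diagm p" using is_diag_diagm[OF P_diag] unfolding p_def .
  have m: "\<forall>i. m i > 0" using M_pos unfolding m_def .
  have p: "\<forall>i. p i \<in> {0,1}" using P_01 unfolding p_def .
  show ?thesis unfolding hM hP
  proof (intro conjI allI impI)
    fix \<nu> lam assume "\<nu> > (0::real)" "invertible (Shat (diagm m) L (diagm p) \<nu> 1 0)"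
      "is_eigenvalue (matrix_inv (Shat (diagm m) L (diagm p) \<nu> 1 0) ** Smat (diagm m) L (diagm p) \<nu> 1 0) lam"
    thus "lam \<le> (zeta1 (diagm m) L (diagm p) \<nu>)\<^sup>2 + (1 + zeta1 (diagm m) L (diagm p) \<nu>)\<^sup>2"
      by (rule case1[OF m p])
  next
    assume "posdef (L + transpose L)"
    then obtain K where K: "\<forall>\<nu>>0. zeta1 (diagm m) L (diagm p) \<nu> \<le> K"
      using zeta1_bound[OF m p] by blast
    have "eventually (\<lambda>\<nu>. zeta1 (diagm m) L (diagm p) \<nu> \<le> K) (at_right 0)"
      using eventually_at_right_less[of "0::real"] by eventually_elim (use K in auto)
    thus "\<exists>C. eventually (\<lambda>\<nu>. zeta1 (diagm m) L (diagm p) \<nu> \<le> C) (at_right 0)" by blast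
  next
    fix \<nu> lam assume "\<nu> > (0::real)" "invertible (Shat (diagm m) L (diagm p) \<nu> 0 1)"
      "is_eigenvalue (matrix_inv (Shat (diagm m) L (diagm p) \<nu> 0 1) ** Smat (diagm m) L (diagm p) \<nu> 0 1) lam"
    thus "lam \<le> (zeta2 (diagm m) L (diagm p) \<nu>)\<^sup>2 + (1 + zeta2 (diagm m) L (diagm p) \<nu>)\<^sup>2"
      by (rule case2[OF m p])
  next
    show "((\<lambda>\<nu>. zeta2 (diagm m) L (diagm p) \<nu>) \<longlongrightarrow> 1) (at_right 0)"
      unfolding zeta2_def by (rule lim2)
  qed
qed

end
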